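(* Let $n\ge4$, $0<\alpha_2,\alpha_3<1$, $\alpha_1=1-\alpha_2-\alpha_3$, $\lambda^*=\big(\frac{n-1+\alpha_1}{n},\frac{\alpha_2}{n},\frac{\alpha_3}{n}\big)$. Define $$\sigma_1=\sum_{i_1=0}^{n-4}\Big(\sum_{i_2=1}^{\lfloor (n-i_1-1)/2\rfloor}|l_{(i_1,i_2,n-i_1-i_2)}(\lambda^* )|+\frac{1-\varepsilon(i_1)}{2}\mathfrak{p}(i_1)\Big),$$ $$\sigma_2=\sum_{i_1=0}^{n-4}\Big(\sum_{i_3=1}^{\lfloor (n-i_1-1)/2\rfloor}|l_{(i_1,n-i_1-i_3,i_3)}(\lambda^* )|+\frac{1-\varepsilon(i_1)}{2}\mathfrak{p}(i_1)\Big).$$ Then for $s=1,2$, $$\sigma_s\le\frac{C_0}{e(\ln n-1)}\sum_{i_1=0}^{n-4}\binom{n}{n-i_1}\frac{1}{n-i_1-1},\qquad C_0=\frac{(\ln2)^2+12\ln2+28}{4\ln2+12}<2.5.$$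
   Context: For an integer $n\ge1$ let $I=\{i=(i_1,i_2,i_3)\in\mathbb{Z}_+^3: i_1+i_2+i_3=n\}$ and $l_i(\lambda)=\prod_{s=1}^{3}\frac{1}{i_s!}\prod_{t=0}^{i_s-1}(n\lambda_s-t)$ for $\lambda=(\lambda_1,\lambda_2,\lambda_3)$ (Lagrange fundamental polynomials for the equally spaced nodes $i/n$ of a triangle in barycentric coordinates). For an integer $i_1$, $\varepsilon(i_1)=0$ if $n-i_1$ is even and $\varepsilon(i_1)=1$ otherwise; when $n-i_1$ is even, $\mathfrak{p}(i_1)=|l_i(\lambda^* )|$ with $i=\big(i_1,\frac{n-i_1}{2},\frac{n-i_1}{2}\big)$ (the term with factor $1-\varepsilon(i_1)=0$ is absent when $n-i_1$ is odd). *)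

theory Defs
  imports Complex_Main
begin

text \<open>One-variable factor of the Lagrange fundamental polynomial:
  (1/k!) * prod_{t=0}^{k-1} (n x - t).\<close>
definition lfac :: "nat \<Rightarrow> nat \<Rightarrow> real \<Rightarrow> real" where
  "lfac n k x = (\<Prod>t<k. real n * x - real t) / fact k"

text \<open>l_i(lambda) for i = (i1,i2,i3), lambda = (l1,l2,l3) in barycentric coordinates.\<close>
definition lagr :: "nat \<Rightarrow> nat \<times> nat \<times> nat \<Rightarrow> real \<times> real \<times> real \<Rightarrow> real" where
  "lagr n i lam = (case i of (i1, i2, i3) \<Rightarrow> case lam of (l1, l2, l3) \<Rightarrow>
      lfac n i1 l1 * lfac n i2 l2 * lfac n i3 l3)"

definition eps :: "nat \<Rightarrow> nat \<Rightarrow> real" where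
  "eps n i1 = (if even (n - i1) then 0 else 1)"

text \<open>p(i1) = |l_(i1,(n-i1)/2,(n-i1)/2)(lambda)| when n - i1 is even; the term is absent
  (taken as 0) when n - i1 is odd.\<close>
definition pfrak :: "nat \<Rightarrow> real \<times> real \<times> real \<Rightarrow> nat \<Rightarrow> real" where
  "pfrak n lam i1 = (if even (n - i1)
      then \<bar>lagr n (i1, (n - i1) div 2, (n - i1) div 2) lam\<bar> else 0)"

end

theory Submission
  imports Defs
begin

lemma lfac_Suc: "lfac n (Suc k) x = lfac n k x * (real n * x - real k) / real (Suc k)"
  unfolding lfac_def by (simp add: fact_Suc field_simps del: of_nat_Suc)

lemma lfac_0 [simp]: "lfac n 0 x = 1"
  unfolding lfac_def by simp

lemma ln_step: "0 < (k::real) \<Longrightarrow> ln (k + 1) \<le> ln k + 1 / k"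
proof -
  assume k: "0 < k"
  have "k + 1 = k * (1 + 1/k)" using k by (simp add: field_simps)
  moreover have "ln (k * (1 + 1/k)) = ln k + ln (1 + 1/k)"
    using k by (intro ln_mult_pos) (auto simp: add_pos_pos)
  ultimately have "ln (k + 1) = ln k + ln (1 + 1/k)" by simp
  also have "ln (1 + 1/k) \<le> 1/k" using k by (intro ln_add_one_self_le_self) simp
  finally show ?thesis by simp
qed

lemma gbound:
  assumes n: "0 < n" and a: "0 < a" "a < 1" and k: "1 \<le> k"
  shows "\<bar>lfac n k (a / real n)\<bar> \<le> a / real k * exp (- a * ln (real k))"
  using k
proof (induction k rule: dec_induct)
  case base
  then show ?case using n a by (simp add: lfac_Suc[of n 0, simplified] abs_of_pos)
next
  case (step k)
  have k1: "real k \<ge> 1" using step by simp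
  have e: "real n * (a / real n) = a" using n by simp
  have "\<bar>lfac n (Suc k) (a / real n)\<bar> = \<bar>lfac n k (a / real n)\<bar> * (real k - a) / (real k + 1)"
    using k1 a n by (simp add: lfac_Suc e abs_mult abs_of_neg)
  also have "\<dots> \<le> a / real k * exp (- a * ln (real k)) * (real k - a) / (real k + 1)"
    using step.IH k1 a by (intro divide_right_mono mult_right_mono) auto
  also have "\<dots> \<le> a / (real k + 1) * exp (- a * ln (real k + 1))"
  proof -
    have "(real k - a) / real k = 1 - a / real k" using k1 by (simp add: field_simps)
    also have "\<dots> \<le> exp (- (a / real k))" by (rule exp_minus_ge)
    finally have h1: "(real k - a) / real k \<le> exp (- (a / real k))" .
    have "a * ln (real k + 1) \<le> a * (ln (real k) + 1 / real k)"
      using ln_step[of "real k"] k1 a by (intro mult_left_mono) auto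
    then have "- a * ln (real k) - a / real k \<le> - a * ln (real k + 1)"
      by (simp add: algebra_simps)
    then have h2: "exp (- a * ln (real k)) * exp (- (a / real k)) \<le> exp (- a * ln (real k + 1))"
      by (simp add: exp_add[symmetric])
    have "a / real k * exp (- a * ln (real k)) * (real k - a) / (real k + 1)
        = a / (real k + 1) * (exp (- a * ln (real k)) * ((real k - a) / real k))"
      using k1 by (simp add: field_simps)
    also have "\<dots> \<le> a / (real k + 1) * (exp (- a * ln (real k)) * exp (- (a / real k)))"
      using h1 a k1 by (intro mult_left_mono) auto
    also have "\<dots> \<le> a / (real k + 1) * exp (- a * ln (real k + 1))"
      using h2 a k1 by (intro mult_left_mono) auto
    finally show ?thesis .
  qed
  finally show ?case by (simp add: ac_simps)
qed

lemma g_Suc: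
  assumes n: "0 < n" and a: "0 < a" "a < 1" and k: "1 \<le> k"
  shows "\<bar>lfac n (Suc k) (a / real n)\<bar> = \<bar>lfac n k (a / real n)\<bar> * (real k - a) / (real k + 1)"
proof -
  have e: "real n * (a / real n) = a" using n by simp
  show ?thesis using k a n by (simp add: lfac_Suc e abs_mult abs_of_neg)
qed

lemma arith_eq: "(a::real) > 0 \<Longrightarrow> (K::real) \<ge> 1 \<Longrightarrow> 1 - G*(K-a)/a + G*(K-a)/(K+1) = 1 - (G*(K-a)/(K+1))*(K+1-a)/a"
proof -
  assume a: "a > 0" and K: "K \<ge> 1"
  have "a * (K + 1) > 0" using a K by simp
  then have h: "a + K * a \<noteq> 0" "K + 1 \<noteq> 0" using K by (auto simp: algebra_simps)
  show ?thesis using h a by (simp add: field_simps)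
qed

lemma gsum_eq:
  assumes n: "0 < n" and a: "0 < a" "a < 1" and K: "1 \<le> K"
  shows "(\<Sum>k = 1..K. \<bar>lfac n k (a / real n)\<bar>) = 1 - \<bar>lfac n K (a / real n)\<bar> * (real K - a) / a"
  using K
proof (induction K rule: dec_induct)
  case base
  then show ?case using n a by (simp add: lfac_Suc[of n 0, simplified] abs_of_pos field_simps)
next
  case (step K)
  have "(\<Sum>k = 1..Suc K. \<bar>lfac n k (a / real n)\<bar>) = (\<Sum>k = 1..K. \<bar>lfac n k (a / real n)\<bar>) + \<bar>lfac n (Suc K) (a / real n)\<bar>"
    by simp
  also have "\<dots> = 1 - \<bar>lfac n K (a / real n)\<bar> * (real K - a) / a + \<bar>lfac n K (a / real n)\<bar> * (real K - a) / (real K + 1)"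
    using step g_Suc[OF n a step.hyps(1)] by simp
  also have "\<dots> = 1 - \<bar>lfac n (Suc K) (a / real n)\<bar> * (real (Suc K) - a) / a"
    unfolding g_Suc[OF n a step.hyps(1)] using arith_eq[of a "real K" "\<bar>lfac n K (a / real n)\<bar>"] a step.hyps(1) by simp
  finally show ?case .
qed

lemma gsum_le:
  assumes n: "0 < n" and a: "0 < a" "a < 1"
  shows "(\<Sum>k = 1..K. \<bar>lfac n k (a / real n)\<bar>) \<le> 1"
proof (cases "K = 0")
  case True then show ?thesis by simp
next
  case False
  then have K: "1 \<le> K" by simp
  have "0 \<le> \<bar>lfac n K (a / real n)\<bar> * (real K - a) / a" using a K by simp
  then show ?thesis using gsum_eq[OF n a K] by linarith
qed

lemma Fbound:
  assumes n: "0 < n" and s: "0 < s" "s < 2" and i: "i < n"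
  shows "\<bar>lfac n i ((real n - s) / real n)\<bar> \<le> real (n choose i) * exp (- s * (ln (real n + 1) - ln (real n - real i + 1)))"
  using i
proof (induction i)
  case 0
  then show ?case by simp
next
  case (Suc i)
  define A where "A = real n - real i"
  have A2: "A \<ge> 2" using Suc.prems unfolding A_def by linarith
  have e: "real n * ((real n - s) / real n) = real n - s" using n by simp
  have ch: "real (Suc i) * real (n choose Suc i) = A * real (n choose i)"
  proof -
    have "Suc i * (n choose Suc i) = n * ((n - 1) choose i)"
      using times_binomial_minus1_eq[of "Suc i" n] by simp
    also have "\<dots> = (n - i) * (n choose i)" by (simp add: binomial_absorb_comp)
    finally have "real (Suc i * (n choose Suc i)) = real ((n - i) * (n choose i))" by simp
    then show ?thesis using Suc.prems unfolding A_def by (simp add: of_nat_diff algebra_simps)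
  qed
  have "\<bar>lfac n (Suc i) ((real n - s) / real n)\<bar> = \<bar>lfac n i ((real n - s) / real n)\<bar> * (A - s) / (real i + 1)"
    unfolding lfac_Suc e
  proof -
    have p: "real n - s - real i = A - s" "A - s > 0" using A2 s unfolding A_def by auto
    show "\<bar>lfac n i ((real n - s) / real n) * (real n - s - real i) / real (Suc i)\<bar> = \<bar>lfac n i ((real n - s) / real n)\<bar> * (A - s) / (real i + 1)"
      unfolding p(1) using p(2) by (simp add: abs_mult add.commute)
  qed
  also have "\<dots> \<le> real (n choose i) * exp (- s * (ln (real n + 1) - ln (A + 1))) * (A - s) / (real i + 1)"
    using Suc A2 s unfolding A_def by (intro divide_right_mono mult_right_mono) auto
  also have "\<dots> \<le> real (n choose i) * (A * exp (- s * (ln (real n + 1) - ln A))) / (real i + 1)"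
  proof -
    have "(A - s) / A = 1 - s / A" using A2 by (simp add: field_simps)
    also have "\<dots> \<le> exp (- (s / A))" by (rule exp_minus_ge)
    finally have h1: "(A - s) / A \<le> exp (- (s / A))" .
    have "s * ln (A + 1) \<le> s * (ln A + 1 / A)"
      using ln_step[of A] A2 s by (intro mult_left_mono) auto
    then have "- s * (ln (real n + 1) - ln (A + 1)) - s / A \<le> - s * (ln (real n + 1) - ln A)"
      by (simp add: algebra_simps)
    then have h2: "exp (- s * (ln (real n + 1) - ln (A + 1))) * exp (- (s / A)) \<le> exp (- s * (ln (real n + 1) - ln A))"
      by (simp add: exp_add[symmetric])
    have "exp (- s * (ln (real n + 1) - ln (A + 1))) * (A - s) = A * (exp (- s * (ln (real n + 1) - ln (A + 1))) * ((A - s) / A))"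
      using A2 by (simp add: field_simps)
    also have "\<dots> \<le> A * (exp (- s * (ln (real n + 1) - ln (A + 1))) * exp (- (s / A)))"
      using h1 A2 by (intro mult_left_mono) auto
    also have "\<dots> \<le> A * exp (- s * (ln (real n + 1) - ln A))"
      using h2 A2 by (intro mult_left_mono) auto
    finally have "exp (- s * (ln (real n + 1) - ln (A + 1))) * (A - s) \<le> A * exp (- s * (ln (real n + 1) - ln A))" .
    then show ?thesis
      by (simp add: divide_right_mono mult_left_mono mult.assoc)
  qed
  also have "\<dots> = real (n choose Suc i) * exp (- s * (ln (real n + 1) - ln A))"
  proof -
    have "real (n choose i) * (A * exp (- s * (ln (real n + 1) - ln A))) / (real i + 1)
       = (A * real (n choose i)) * exp (- s * (ln (real n + 1) - ln A)) / (real i + 1)" by simp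
    also have "\<dots> = (real (Suc i) * real (n choose Suc i)) * exp (- s * (ln (real n + 1) - ln A)) / (real i + 1)"
      by (simp only: ch)
    also have "\<dots> = real (n choose Suc i) * exp (- s * (ln (real n + 1) - ln A))"
      by (simp add: field_simps)
    finally show ?thesis .
  qed
  also have "A = real n - real (Suc i) + 1" unfolding A_def by simp
  finally show ?case .
qed

lemma aexp: assumes "0 < (a::real)" "0 < L" shows "a * exp (- a * L) \<le> 1 / (exp 1 * L)"
proof -
  have "a * L \<le> exp (a * L - 1)" using exp_ge_add_one_self[of "a * L - 1"] by simp
  also have "\<dots> = exp (a * L) / exp 1" by (simp add: exp_diff)
  finally have "a * L * exp 1 \<le> exp (a * L)" by (simp add: field_simps)
  then have "a * L * exp 1 * exp (- a * L) \<le> 1"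
    by (simp add: exp_minus field_simps)
  then show ?thesis using assms by (simp add: field_simps)
qed

lemma e_ge: "5 / 2 \<le> exp (1::real)"
  using exp_lower_Taylor_quadratic[of 1] by simp

lemma key:
  assumes n4: "n \<ge> 4" and i1: "i1 \<le> n - 4" and j: "1 \<le> j" "2 * j \<le> n - i1"
    and a: "0 < a" "a < 1" and b: "0 < b" "b < 1"
  shows "\<bar>lfac n i1 ((real n - (a + b)) / real n)\<bar> * \<bar>lfac n j (a / real n)\<bar> * \<bar>lfac n (n - i1 - j) (b / real n)\<bar>
     \<le> real (n choose i1) * \<bar>lfac n j (a / real n)\<bar> * (2 / (real (n - i1) * exp 1 * (ln (real n) - 1)))"
proof -
  define m where "m = n - i1"
  define i3 where "i3 = m - j"
  have m4: "m \<ge> 4" "m \<le> n" using i1 n4 unfolding m_def by auto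
  have i3: "i3 \<ge> 2" "2 * real i3 \<ge> real m" using j m4 unfolding i3_def m_def by auto
  have rm: "real n - real i1 + 1 = real m + 1" using i1 n4 unfolding m_def by (simp add: of_nat_diff)
  define D where "D = ln (real n + 1) - ln (real m + 1)"
  have D0: "D \<ge> 0" using m4 unfolding D_def by simp
  have F: "\<bar>lfac n i1 ((real n - (a + b)) / real n)\<bar> \<le> real (n choose i1) * exp (- (a + b) * D)"
    using Fbound[of n "a + b" i1] n4 a b i1 rm unfolding D_def by simp
  have F2: "\<bar>lfac n i1 ((real n - (a + b)) / real n)\<bar> \<le> real (n choose i1) * exp (- b * D)"
  proof -
    have "exp (- (a + b) * D) \<le> exp (- b * D)" using a D0 by (simp add: algebra_simps)
    then show ?thesis using F by (meson mult_left_mono of_nat_0_le_iff order_trans)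
  qed
  have G: "\<bar>lfac n i3 (b / real n)\<bar> \<le> b / real i3 * exp (- b * ln (real i3))"
    using gbound[of n b i3] n4 b i3 by simp
  define L where "L = D + ln (real i3)"
  have Lge: "ln (real n) - 1 \<le> L"
  proof -
    have "ln (real n) - 1 \<le> ln (real n) + ln (2/5)"
    proof -
      have "exp (-1) \<le> (2/5::real)" using e_ge by (simp add: exp_minus field_simps)
      then have "ln (exp (-1)) \<le> ln (2/5::real)" by (subst ln_le_cancel_iff) auto
      then have "-1 \<le> ln (2/5::real)" by simp
      then show ?thesis by simp
    qed
    also have "\<dots> = ln (2/5 * real n)" using n4 ln_mult_pos[of "2/5" "real n"] by simp
    also have "\<dots> \<le> ln ((real n + 1) * real i3 / (real m + 1))"
    proof (rule ln_mono)
      show "0 < 2/5 * real n" using n4 by simp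
      have "2/5 * (real m + 1) \<le> real i3" using i3 m4 by simp
      then have "real n * (2/5 * (real m + 1)) \<le> real n * real i3"
        by (intro mult_left_mono) auto
      moreover have "real n * real i3 \<le> (real n + 1) * real i3" by (intro mult_right_mono) auto
      ultimately have "2/5 * real n * (real m + 1) \<le> (real n + 1) * real i3" by (simp add: algebra_simps)
      then show "2/5 * real n \<le> (real n + 1) * real i3 / (real m + 1)"
        by (simp add: field_simps)
    qed
    also have "\<dots> = L" unfolding L_def D_def using i3 by (simp add: ln_div ln_mult_pos)
    finally show ?thesis .
  qed
  have Ln: "0 < ln (real n) - 1"
  proof -
    have "exp 1 < (4::real)" using exp_le by simp
    then have "exp 1 < real n" using n4 by simp
    then have "ln (exp 1) < ln (real n)" using n4 by (subst ln_less_cancel_iff) auto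
    then have "1 < ln (real n)" by simp
    then show ?thesis by simp
  qed
  have "\<bar>lfac n i1 ((real n - (a + b)) / real n)\<bar> * \<bar>lfac n i3 (b / real n)\<bar>
      \<le> real (n choose i1) * exp (- b * D) * (b / real i3 * exp (- b * ln (real i3)))"
    using F2 G by (intro mult_mono) auto
  also have "\<dots> = real (n choose i1) / real i3 * (b * exp (- b * L))"
    unfolding L_def by (simp add: algebra_simps exp_add[symmetric])
  also have "\<dots> \<le> real (n choose i1) / real i3 * (1 / (exp 1 * L))"
    using aexp[of b L] b Ln Lge by (intro mult_left_mono) auto
  also have "\<dots> \<le> real (n choose i1) * (2 / real m) * (1 / (exp 1 * (ln (real n) - 1)))"
  proof -
    have "1 / real i3 \<le> 2 / real m" using i3 m4 by (simp add: field_simps)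
    moreover have "1 / (exp 1 * L) \<le> 1 / (exp 1 * (ln (real n) - 1))"
      using Lge Ln by (intro divide_left_mono mult_left_mono) auto
    ultimately have "1 / real i3 * (1 / (exp 1 * L)) \<le> 2 / real m * (1 / (exp 1 * (ln (real n) - 1)))"
      using Ln Lge by (intro mult_mono) auto
    then have "real (n choose i1) * (1 / real i3 * (1 / (exp 1 * L))) \<le> real (n choose i1) * (2 / real m * (1 / (exp 1 * (ln (real n) - 1))))"
      by (intro mult_left_mono) auto
    then show ?thesis by simp
  qed
  also have "\<dots> = real (n choose i1) * (2 / (real m * exp 1 * (ln (real n) - 1)))"
    by simp
  finally have *: "\<bar>lfac n i1 ((real n - (a + b)) / real n)\<bar> * \<bar>lfac n i3 (b / real n)\<bar>
      \<le> real (n choose i1) * (2 / (real m * exp 1 * (ln (real n) - 1)))" .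
  have "\<bar>lfac n i1 ((real n - (a + b)) / real n)\<bar> * \<bar>lfac n j (a / real n)\<bar> * \<bar>lfac n i3 (b / real n)\<bar>
     = \<bar>lfac n j (a / real n)\<bar> * (\<bar>lfac n i1 ((real n - (a + b)) / real n)\<bar> * \<bar>lfac n i3 (b / real n)\<bar>)" by simp
  also have "\<dots> \<le> \<bar>lfac n j (a / real n)\<bar> * (real (n choose i1) * (2 / (real m * exp 1 * (ln (real n) - 1))))"
    using * by (intro mult_left_mono) auto
  finally show ?thesis unfolding i3_def m_def by (simp add: ac_simps)
qed

lemma inner:
  assumes n4: "n \<ge> 4" and i1: "i1 \<le> n - 4"
    and a: "0 < a" "a < 1" and b: "0 < b" "b < 1"
  shows "(\<Sum>j = 1..(n - i1 - 1) div 2. \<bar>lfac n i1 ((real n - (a + b)) / real n)\<bar> * \<bar>lfac n j (a / real n)\<bar> * \<bar>lfac n (n - i1 - j) (b / real n)\<bar>)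
     + (1 - eps n i1) / 2 * (if even (n - i1) then \<bar>lfac n i1 ((real n - (a + b)) / real n)\<bar> * \<bar>lfac n ((n - i1) div 2) (a / real n)\<bar> * \<bar>lfac n ((n - i1) div 2) (b / real n)\<bar> else 0)
     \<le> real (n choose i1) * (2 / (real (n - i1) * exp 1 * (ln (real n) - 1)))"
proof -
  define T where "T j = \<bar>lfac n i1 ((real n - (a + b)) / real n)\<bar> * \<bar>lfac n j (a / real n)\<bar> * \<bar>lfac n (n - i1 - j) (b / real n)\<bar>" for j
  define m where "m = n - i1"
  define K where "K = real (n choose i1) * (2 / (real (n - i1) * exp 1 * (ln (real n) - 1)))"
  have m4: "m \<ge> 4" using i1 n4 unfolding m_def by auto
  have T0: "\<And>j. T j \<ge> 0" unfolding T_def by simp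
  have "(\<Sum>j = 1..(m - 1) div 2. T j) + (1 - eps n i1) / 2 * (if even m then T (m div 2) else 0)
        \<le> (\<Sum>j = 1..m div 2. T j)"
  proof (cases "even m")
    case True
    then have md: "m div 2 = Suc ((m - 1) div 2)" using m4 by (auto elim!: evenE)
    have "(1 - eps n i1) / 2 * T (m div 2) \<le> T (m div 2)"
      using True T0[of "m div 2"] unfolding eps_def m_def by simp
    then show ?thesis using True unfolding md by simp
  next
    case False
    then have md: "(m - 1) div 2 = m div 2" by (auto elim!: oddE)
    show ?thesis using False unfolding md by (simp add: eps_def m_def)
  qed
  also have "\<dots> \<le> (\<Sum>j = 1..m div 2. K * \<bar>lfac n j (a / real n)\<bar>)"
  proof (rule sum_mono)
    fix j assume "j \<in> {1..m div 2}"
    then have j: "1 \<le> j" "2 * j \<le> n - i1" unfolding m_def by auto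
    show "T j \<le> K * \<bar>lfac n j (a / real n)\<bar>"
      using key[OF n4 i1 j a b] unfolding T_def K_def by (simp add: ac_simps)
  qed
  also have "\<dots> = K * (\<Sum>j = 1..m div 2. \<bar>lfac n j (a / real n)\<bar>)" by (simp add: sum_distrib_left)
  also have "\<dots> \<le> K * 1"
  proof (rule mult_left_mono)
    show "(\<Sum>j = 1..m div 2. \<bar>lfac n j (a / real n)\<bar>) \<le> 1" using gsum_le[of n a] n4 a by simp
    have "ln (real n) - 1 > 0"
    proof -
      have "exp 1 < real n" using exp_le n4 by simp
      then have "ln (exp 1) < ln (real n)" using n4 by (subst ln_less_cancel_iff) auto
      then show ?thesis by simp
    qed
    then show "0 \<le> K" unfolding K_def using m4 m_def by simp
  qed
  finally have fin: "(\<Sum>j = 1..(m - 1) div 2. T j) + (1 - eps n i1) / 2 * (if even m then T (m div 2) else 0) \<le> K" by simp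
  have P: "(if even m then \<bar>lfac n i1 ((real n - (a + b)) / real n)\<bar> * \<bar>lfac n (m div 2) (a / real n)\<bar> * \<bar>lfac n (m div 2) (b / real n)\<bar> else 0)
     = (if even m then T (m div 2) else 0)"
  proof (cases "even m")
    case True
    then have "m - m div 2 = m div 2" by (auto elim!: evenE)
    then have "n - i1 - m div 2 = m div 2" unfolding m_def by simp
    then show ?thesis using True unfolding T_def by simp
  qed simp
  have S: "(\<Sum>j = 1..(n - i1 - 1) div 2. \<bar>lfac n i1 ((real n - (a + b)) / real n)\<bar> * \<bar>lfac n j (a / real n)\<bar> * \<bar>lfac n (n - i1 - j) (b / real n)\<bar>) = (\<Sum>j = 1..(m - 1) div 2. T j)"
    unfolding T_def m_def by simp
  show ?thesis using fin unfolding S P[unfolded m_def] unfolding K_def m_def by simp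
qed

lemma ln2_lt: "ln 2 < (0.73::real)"
proof -
  have "1.4316 \<le> exp (0.365::real)" using exp_lower_Taylor_quadratic[of "0.365::real"] by (simp add: power2_eq_square)
  then have "1.4316 * 1.4316 \<le> exp (0.365::real) * exp 0.365" by (intro mult_mono) auto
  also have "\<dots> = exp 0.73" by (simp add: exp_add[symmetric])
  finally have "2 < exp (0.73::real)" by simp
  then have "ln 2 < ln (exp (0.73::real))" by (subst ln_less_cancel_iff) auto
  then show ?thesis by simp
qed

lemma C0_bounds: "2 \<le> ((ln 2)^2 + 12 * ln 2 + 28) / (4 * ln 2 + 12::real)"
   "((ln 2)^2 + 12 * ln 2 + 28) / (4 * ln 2 + 12::real) < 2.5"
proof -
  define x :: real where "x = ln 2"
  have x0: "0 < x" unfolding x_def by simp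
  have x1: "x < 0.73" unfolding x_def by (rule ln2_lt)
  have d: "4 * x + 12 > 0" using x0 by simp
  have "2 * (4 * x + 12) \<le> x^2 + 12 * x + 28"
  proof -
    have "0 \<le> (x + 2)^2" by simp
    then show ?thesis by (simp add: power2_eq_square algebra_simps)
  qed
  then show "2 \<le> ((ln 2)^2 + 12 * ln 2 + 28) / (4 * ln 2 + 12::real)"
    using d unfolding x_def[symmetric] by (simp add: pos_le_divide_eq)
  have "x * x < 0.73 * 0.73" using x0 x1 by (intro mult_strict_mono) auto
  then have "x^2 + 12 * x + 28 < 2.5 * (4 * x + 12)" using x1 by (simp add: power2_eq_square)
  then show "((ln 2)^2 + 12 * ln 2 + 28) / (4 * ln 2 + 12::real) < 2.5"
    using d unfolding x_def[symmetric] by (simp add: pos_divide_less_eq)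
qed

lemma term_final:
  assumes n4: "n \<ge> 4" and i1: "i1 \<le> n - 4"
    and a: "0 < a" "a < 1" and b: "0 < b" "b < 1"
  shows "(\<Sum>j = 1..(n - i1 - 1) div 2. \<bar>lfac n i1 ((real n - (a + b)) / real n)\<bar> * \<bar>lfac n j (a / real n)\<bar> * \<bar>lfac n (n - i1 - j) (b / real n)\<bar>)
     + (1 - eps n i1) / 2 * (if even (n - i1) then \<bar>lfac n i1 ((real n - (a + b)) / real n)\<bar> * \<bar>lfac n ((n - i1) div 2) (a / real n)\<bar> * \<bar>lfac n ((n - i1) div 2) (b / real n)\<bar> else 0)
     \<le> ((ln 2)^2 + 12 * ln 2 + 28) / (4 * ln 2 + 12) / (exp 1 * (ln (real n) - 1)) *
        (real (n choose (n - i1)) * (1 / (real (n - i1) - 1)))"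
proof -
  define C0 :: real where "C0 = ((ln 2)^2 + 12 * ln 2 + 28) / (4 * ln 2 + 12)"
  define m where "m = n - i1"
  have m4: "real m \<ge> 4" using i1 n4 unfolding m_def by auto
  have Ln: "ln (real n) - 1 > 0"
  proof -
    have "exp 1 < real n" using exp_le n4 by simp
    then have "ln (exp 1) < ln (real n)" using n4 by (subst ln_less_cancel_iff) auto
    then show ?thesis by simp
  qed
  have E: "exp 1 * (ln (real n) - 1) > 0" using Ln by simp
  have ch: "n choose i1 = n choose (n - i1)" using i1 by (intro binomial_symmetric) simp
  have "2 / real m \<le> C0 / (real m - 1)"
  proof -
    have "2 / real m \<le> 2 / (real m - 1)" using m4 by (intro divide_left_mono) auto
    also have "\<dots> \<le> C0 / (real m - 1)" using C0_bounds(1) m4 unfolding C0_def by (intro divide_right_mono) auto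
    finally show ?thesis .
  qed
  then have "2 / real m / (exp 1 * (ln (real n) - 1)) \<le> C0 / (real m - 1) / (exp 1 * (ln (real n) - 1))"
    using E by (intro divide_right_mono) auto
  then have "real (n choose i1) * (2 / real m / (exp 1 * (ln (real n) - 1))) \<le> real (n choose i1) * (C0 / (real m - 1) / (exp 1 * (ln (real n) - 1)))"
    by (intro mult_left_mono) auto
  then have "real (n choose i1) * (2 / (real (n - i1) * exp 1 * (ln (real n) - 1))) \<le> C0 / (exp 1 * (ln (real n) - 1)) * (real (n choose (n - i1)) * (1 / (real (n - i1) - 1)))"
    unfolding ch m_def by (simp add: field_simps)
  then show ?thesis using inner[OF n4 i1 a b] unfolding C0_def by linarith
qed

theorem lemma22:
  fixes n :: nat and a1 a2 a3 :: real
  assumes n4: "n \<ge> 4"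
    and a2: "0 < a2" "a2 < 1"
    and a3: "0 < a3" "a3 < 1"
    and a1: "a1 = 1 - a2 - a3"
  shows "let lam = ((real n - 1 + a1) / real n, a2 / real n, a3 / real n);
             C0 = ((ln 2)^2 + 12 * ln 2 + 28) / (4 * ln 2 + 12);
             sigma1 = (\<Sum>i1 = 0..n - 4.
               (\<Sum>i2 = 1..(n - i1 - 1) div 2. \<bar>lagr n (i1, i2, n - i1 - i2) lam\<bar>)
               + (1 - eps n i1) / 2 * pfrak n lam i1);
             sigma2 = (\<Sum>i1 = 0..n - 4.
               (\<Sum>i3 = 1..(n - i1 - 1) div 2. \<bar>lagr n (i1, n - i1 - i3, i3) lam\<bar>)
               + (1 - eps n i1) / 2 * pfrak n lam i1);
             B = C0 / (exp 1 * (ln (real n) - 1)) *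
               (\<Sum>i1 = 0..n - 4. real (n choose (n - i1)) * (1 / (real (n - i1) - 1)))
         in sigma1 \<le> B \<and> sigma2 \<le> B \<and> C0 < 2.5"
proof -
  define K where "K = ((ln 2)^2 + 12 * ln 2 + 28) / (4 * ln 2 + 12) / (exp 1 * (ln (real n) - 1))"
  have x1: "(real n - 1 + a1) / real n = (real n - (a2 + a3)) / real n" using a1 by simp
  have x2: "(real n - (a2 + a3)) / real n = (real n - (a3 + a2)) / real n" by (simp add: add.commute)
  define lam where "lam = ((real n - 1 + a1) / real n, a2 / real n, a3 / real n)"
  have s1: "(\<Sum>i1 = 0..n - 4.
               (\<Sum>i2 = 1..(n - i1 - 1) div 2. \<bar>lagr n (i1, i2, n - i1 - i2) lam\<bar>)
               + (1 - eps n i1) / 2 * pfrak n lam i1)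
      \<le> (\<Sum>i1 = 0..n - 4. K * (real (n choose (n - i1)) * (1 / (real (n - i1) - 1))))"
  proof (rule sum_mono)
    fix i1 assume "i1 \<in> {0..n - 4}"
    then have i1: "i1 \<le> n - 4" by simp
    show "(\<Sum>i2 = 1..(n - i1 - 1) div 2. \<bar>lagr n (i1, i2, n - i1 - i2) lam\<bar>)
               + (1 - eps n i1) / 2 * pfrak n lam i1 \<le> K * (real (n choose (n - i1)) * (1 / (real (n - i1) - 1)))"
    proof -
      have eq: "(\<Sum>i2 = 1..(n - i1 - 1) div 2. \<bar>lagr n (i1, i2, n - i1 - i2) lam\<bar>)
               + (1 - eps n i1) / 2 * pfrak n lam i1 = (\<Sum>j = 1..(n - i1 - 1) div 2. \<bar>lfac n i1 ((real n - (a2 + a3)) / real n)\<bar> * \<bar>lfac n j (a2 / real n)\<bar> * \<bar>lfac n (n - i1 - j) (a3 / real n)\<bar>)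
     + (1 - eps n i1) / 2 * (if even (n - i1) then \<bar>lfac n i1 ((real n - (a2 + a3)) / real n)\<bar> * \<bar>lfac n ((n - i1) div 2) (a2 / real n)\<bar> * \<bar>lfac n ((n - i1) div 2) (a3 / real n)\<bar> else 0)"
        unfolding lam_def x1 lagr_def pfrak_def by (simp add: abs_mult)
      show ?thesis unfolding eq K_def by (rule term_final[OF n4 i1 a2 a3])
    qed
  qed
  have s2: "(\<Sum>i1 = 0..n - 4.
               (\<Sum>i3 = 1..(n - i1 - 1) div 2. \<bar>lagr n (i1, n - i1 - i3, i3) lam\<bar>)
               + (1 - eps n i1) / 2 * pfrak n lam i1)
      \<le> (\<Sum>i1 = 0..n - 4. K * (real (n choose (n - i1)) * (1 / (real (n - i1) - 1))))"
  proof (rule sum_mono)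
    fix i1 assume "i1 \<in> {0..n - 4}"
    then have i1: "i1 \<le> n - 4" by simp
    show "(\<Sum>i3 = 1..(n - i1 - 1) div 2. \<bar>lagr n (i1, n - i1 - i3, i3) lam\<bar>)
               + (1 - eps n i1) / 2 * pfrak n lam i1 \<le> K * (real (n choose (n - i1)) * (1 / (real (n - i1) - 1)))"
    proof -
      have eq: "(\<Sum>i3 = 1..(n - i1 - 1) div 2. \<bar>lagr n (i1, n - i1 - i3, i3) lam\<bar>)
               + (1 - eps n i1) / 2 * pfrak n lam i1 = (\<Sum>j = 1..(n - i1 - 1) div 2. \<bar>lfac n i1 ((real n - (a3 + a2)) / real n)\<bar> * \<bar>lfac n j (a3 / real n)\<bar> * \<bar>lfac n (n - i1 - j) (a2 / real n)\<bar>)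
     + (1 - eps n i1) / 2 * (if even (n - i1) then \<bar>lfac n i1 ((real n - (a3 + a2)) / real n)\<bar> * \<bar>lfac n ((n - i1) div 2) (a3 / real n)\<bar> * \<bar>lfac n ((n - i1) div 2) (a2 / real n)\<bar> else 0)"
        unfolding lam_def x1 x2 lagr_def pfrak_def by (simp add: abs_mult ac_simps)
      show ?thesis unfolding eq K_def by (rule term_final[OF n4 i1 a3 a2])
    qed
  qed
  show ?thesis
    unfolding Let_def lam_def[symmetric]
    using s1 s2 C0_bounds(2) unfolding K_def sum_distrib_left[symmetric] by simp
qed

end
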